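(* Let $(X,\pi)$ be a finite symmetric two-player game with relative payoff game $(X,\Delta)$, and suppose $\Delta$ is quasiconcave with respect to a total order $\le$ on $X$. (1) If $x^*$ is a fESS of $(X,\pi)$ and $x$ is between some $y\in X$ and $x^*$, then $\Delta(x,y)=-\Delta(y,x)\ge 0$. (2) If $x^*$ and $x^{**}$ are fESS of $(X,\pi)$, then so is every $x$ between $x^*$ and $x^{**}$.
   Context: $\pi(x,y)$ is the payoff of the player choosing $x$ against $y$; $\Delta(x,y)=\pi(x,y)-\pi(y,x)$. $\Delta$ is quasiconcave (single-peaked) with respect to a total order $\le$ on the finite set $X$ if for each $y\in X$ the function $x\mapsto\Delta(x,y)$ is weakly increasing up to some $k_y\in X$ and weakly decreasing from $k_y$ on (i.e. $\Delta(x,y)\le\Delta(x',y)$ for $x\le x'\le k_y$ and $\Delta(x,y)\ge\Delta(x',y)$ for $k_y\le x\le x'$). $x$ is between $x'$ and $x''$ if $x'\le x\le x''$ or $x''\le x\le x'$. An action $x^*$ is a fESS (finite population evolutionary stable strategy) if $\pi(x^*,x)\ge\pi(x,x^* )$, equivalently $\Delta(x^*,x)\ge0$, for all $x\in X$. *)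

theory Defs
  imports Complex_Main
begin

definition relpay :: "('a \<Rightarrow> 'a \<Rightarrow> real) \<Rightarrow> 'a \<Rightarrow> 'a \<Rightarrow> real" where
  "relpay \<pi> x y = \<pi> x y - \<pi> y x"

definition quasiconcave_on :: "'a::linorder set \<Rightarrow> ('a \<Rightarrow> 'a \<Rightarrow> real) \<Rightarrow> bool" where
  "quasiconcave_on X D \<longleftrightarrow>
     (\<forall>y\<in>X. \<exists>k\<in>X.
        (\<forall>x\<in>X. \<forall>x'\<in>X. x \<le> x' \<and> x' \<le> k \<longrightarrow> D x y \<le> D x' y) \<and>
        (\<forall>x\<in>X. \<forall>x'\<in>X. k \<le> x \<and> x \<le> x' \<longrightarrow> D x y \<ge> D x' y))"

definition between :: "'a::linorder \<Rightarrow> 'a \<Rightarrow> 'a \<Rightarrow> bool" where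
  "between x a b \<longleftrightarrow> (a \<le> x \<and> x \<le> b) \<or> (b \<le> x \<and> x \<le> a)"

definition fESS :: "'a set \<Rightarrow> ('a \<Rightarrow> 'a \<Rightarrow> real) \<Rightarrow> 'a \<Rightarrow> bool" where
  "fESS X \<pi> xs \<longleftrightarrow> xs \<in> X \<and> (\<forall>x\<in>X. \<pi> xs x \<ge> \<pi> x xs)"

end

theory Submission
  imports Defs
begin

lemma qc_min:
  assumes q: "quasiconcave_on X D" and y: "y \<in> X" and a: "a \<in> X" and b: "b \<in> X"
    and x: "x \<in> X" and bt: "between x a b"
  shows "D x y \<ge> min (D a y) (D b y)"
proof -
  from q y obtain k where k: "k \<in> X"
    and up: "\<forall>x\<in>X. \<forall>x'\<in>X. x \<le> x' \<and> x' \<le> k \<longrightarrow> D x y \<le> D x' y"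
    and dn: "\<forall>x\<in>X. \<forall>x'\<in>X. k \<le> x \<and> x \<le> x' \<longrightarrow> D x y \<ge> D x' y"
    unfolding quasiconcave_on_def by blast
  have "x \<le> k \<or> k \<le> x" by auto
  then show ?thesis
  proof
    assume xk: "x \<le> k"
    from bt show ?thesis unfolding between_def
      using up a b x xk by (metis min.coboundedI1 min.coboundedI2)
  next
    assume kx: "k \<le> x"
    from bt show ?thesis unfolding between_def
      using dn a b x kx by (metis min.coboundedI1 min.coboundedI2)
  qed
qed

theorem lemma5:
  fixes X :: "'a::linorder set" and \<pi> :: "'a \<Rightarrow> 'a \<Rightarrow> real"
  assumes "finite X"
    and "quasiconcave_on X (relpay \<pi>)"
  shows "(\<forall>xs y x. fESS X \<pi> xs \<and> y \<in> X \<and> x \<in> X \<and> between x y xs \<longrightarrow>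
             relpay \<pi> x y = - relpay \<pi> y x \<and> relpay \<pi> x y \<ge> 0)
       \<and> (\<forall>xs xss x. fESS X \<pi> xs \<and> fESS X \<pi> xss \<and> x \<in> X \<and> between x xs xss \<longrightarrow>
             fESS X \<pi> x)"
proof (intro conjI allI impI)
  fix xs y x assume h: "fESS X \<pi> xs \<and> y \<in> X \<and> x \<in> X \<and> between x y xs"
  show "relpay \<pi> x y = - relpay \<pi> y x" by (simp add: relpay_def)
  have xs: "xs \<in> X" "relpay \<pi> xs y \<ge> 0" using h by (auto simp: fESS_def relpay_def)
  have "relpay \<pi> x y \<ge> min (relpay \<pi> y y) (relpay \<pi> xs y)"
    using qc_min[OF assms(2)] h xs by blast
  then show "relpay \<pi> x y \<ge> 0" using xs by (simp add: relpay_def)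
next
  fix xs xss x assume h: "fESS X \<pi> xs \<and> fESS X \<pi> xss \<and> x \<in> X \<and> between x xs xss"
  have "\<forall>z\<in>X. relpay \<pi> x z \<ge> 0"
  proof
    fix z assume z: "z \<in> X"
    have a: "xs \<in> X" "xss \<in> X" "relpay \<pi> xs z \<ge> 0" "relpay \<pi> xss z \<ge> 0"
      using h z by (auto simp: fESS_def relpay_def)
    have "relpay \<pi> x z \<ge> min (relpay \<pi> xs z) (relpay \<pi> xss z)"
      using qc_min[OF assms(2) z a(1) a(2)] h by blast
    then show "relpay \<pi> x z \<ge> 0" using a by linarith
  qed
  then show "fESS X \<pi> x" using h by (auto simp: fESS_def relpay_def)
qed

end
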